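(* Let $X$ be an infinite set. Then the symmetric monoid $\mathrm{Map}(X)$ of all maps $X\to X$ (under composition) is not sofic.
   Context: For a non-empty finite set $Y$, $\mathrm{Map}(Y)$ is the monoid of all maps $Y\to Y$ under composition (identity $\mathrm{Id}_Y$) with the Hamming metric $d_Y(f,g)=|\{y\in Y : f(y)\ne g(y)\}|/|Y|$. For a monoid $M$ with identity $1_M$, finite $K\subset M$ and $\varepsilon,\alpha>0$, a map $\varphi\colon M\to\mathrm{Map}(Y)$ is a $(K,\varepsilon)$-morphism if $d_Y(\varphi(k_1k_2),\varphi(k_1)\varphi(k_2))\le\varepsilon$ for all $k_1,k_2\in K$ and $d_Y(\varphi(1_M),\mathrm{Id}_Y)\le\varepsilon$; it is $(K,\alpha)$-injective if $d_Y(\varphi(k_1),\varphi(k_2))\ge\alpha$ for all distinct $k_1,k_2\in K$. $M$ is sofic if for every finite $K\subset M$ and every $\varepsilon>0$ there exist a non-empty finite set $Y$ and a $(K,1-\varepsilon)$-injective $(K,\varepsilon)$-morphism $\varphi\colon M\to\mathrm{Map}(Y)$. *)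

theory Defs
  imports Complex_Main "HOL-Algebra.Group" "HOL-Library.FuncSet"
begin

definition hamming :: "'b set \<Rightarrow> ('b \<Rightarrow> 'b) \<Rightarrow> ('b \<Rightarrow> 'b) \<Rightarrow> real" where
  "hamming Y f g = real (card {y \<in> Y. f y \<noteq> g y}) / real (card Y)"

text \<open>The finite sets Y are taken as
  finite subsets of nat (every finite set is in bijection with one); a map
  phi : M -> Map(Y) is a function sending each element of M to a self-map of Y.\<close>
definition sofic :: "('a, 'c) monoid_scheme \<Rightarrow> bool" where
  "sofic M \<longleftrightarrow>
    (\<forall>K \<epsilon>. K \<subseteq> carrier M \<and> finite K \<and> (\<epsilon>::real) > 0 \<longrightarrow>
      (\<exists>(Y::nat set) (\<phi>::'a \<Rightarrow> nat \<Rightarrow> nat).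
         finite Y \<and> Y \<noteq> {} \<and>
         (\<forall>m \<in> carrier M. \<phi> m \<in> Y \<rightarrow> Y) \<and>
         (\<forall>k1\<in>K. \<forall>k2\<in>K. hamming Y (\<phi> (k1 \<otimes>\<^bsub>M\<^esub> k2)) (\<phi> k1 \<circ> \<phi> k2) \<le> \<epsilon>) \<and>
         hamming Y (\<phi> \<one>\<^bsub>M\<^esub>) id \<le> \<epsilon> \<and>
         (\<forall>k1\<in>K. \<forall>k2\<in>K. k1 \<noteq> k2 \<longrightarrow> hamming Y (\<phi> k1) (\<phi> k2) \<ge> 1 - \<epsilon>)))"

definition Map_monoid :: "'a set \<Rightarrow> ('a \<Rightarrow> 'a) monoid" where
  "Map_monoid X = \<lparr>carrier = X \<rightarrow>\<^sub>E X, mult = (\<lambda>f g. compose X f g), one = restrict id X\<rparr>"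

end

theory Submission
  imports Defs
begin

lemma hamming_triangle:
  assumes "finite Y"
  shows "hamming Y f h \<le> hamming Y f g + hamming Y g h"
proof -
  have sub: "{y \<in> Y. f y \<noteq> h y} \<subseteq> {y \<in> Y. f y \<noteq> g y} \<union> {y \<in> Y. g y \<noteq> h y}" by auto
  have "card {y \<in> Y. f y \<noteq> h y} \<le> card ({y \<in> Y. f y \<noteq> g y} \<union> {y \<in> Y. g y \<noteq> h y})"
    by (rule card_mono) (use assms sub in auto)
  also have "\<dots> \<le> card {y \<in> Y. f y \<noteq> g y} + card {y \<in> Y. g y \<noteq> h y}" by (rule card_Un_le)
  finally have "real (card {y \<in> Y. f y \<noteq> h y}) \<le> real (card {y \<in> Y. f y \<noteq> g y}) + real (card {y \<in> Y. g y \<noteq> h y})"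
    by linarith
  then show ?thesis unfolding hamming_def by (simp add: divide_right_mono add_divide_distrib[symmetric])
qed

lemma hamming_sym: "hamming Y f g = hamming Y g f"
  unfolding hamming_def by (metis (mono_tags) eq_commute)

lemma key:
  assumes "finite Y" and B: "\<forall>y\<in>Y. B y \<in> Y"
  shows "hamming Y (B \<circ> A) id \<le> hamming Y (A \<circ> B) id"
proof -
  let ?S = "{y \<in> Y. A (B y) = y}"
  let ?T = "{y \<in> Y. B (A y) = y}"
  have inj: "inj_on B ?S" by (rule inj_onI) (metis (mono_tags, lifting) mem_Collect_eq)
  have "B ` ?S \<subseteq> ?T" using B by auto
  hence "card (B ` ?S) \<le> card ?T" by (rule card_mono[rotated]) (use assms in auto)
  hence ST: "card ?S \<le> card ?T" using card_image[OF inj] by simp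
  have c1: "card {y \<in> Y. (A \<circ> B) y \<noteq> id y} = card Y - card ?S"
  proof -
    have "{y \<in> Y. (A \<circ> B) y \<noteq> id y} = Y - ?S" by auto
    thus ?thesis using assms(1) by (simp add: card_Diff_subset)
  qed
  have c2: "card {y \<in> Y. (B \<circ> A) y \<noteq> id y} = card Y - card ?T"
  proof -
    have "{y \<in> Y. (B \<circ> A) y \<noteq> id y} = Y - ?T" by auto
    thus ?thesis using assms(1) by (simp add: card_Diff_subset)
  qed
  have "card {y \<in> Y. (B \<circ> A) y \<noteq> id y} \<le> card {y \<in> Y. (A \<circ> B) y \<noteq> id y}"
    using c1 c2 ST by linarith
  thus ?thesis unfolding hamming_def by (simp add: divide_right_mono)
qed

theorem corollary5p8:
  fixes X :: "'a set"
  assumes "infinite X"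
  shows "\<not> sofic (Map_monoid X)"
proof
  assume sof: "sofic (Map_monoid X)"
  from assms obtain x0 where x0: "x0 \<in> X" by (metis finite.emptyI ex_in_conv)
  from infinite_imp_bij_betw[OF assms, of x0] obtain h where hb: "bij_betw h X (X - {x0})" by blast
  define b where "b = restrict h X"
  define a where "a = (\<lambda>x\<in>X. if x \<in> h ` X then inv_into X h x else x0)"
  have hinj: "inj_on h X" using hb bij_betw_def by blast
  have hX: "\<And>x. x \<in> X \<Longrightarrow> h x \<in> X - {x0}" using hb bij_betwE by blast
  let ?M = "Map_monoid X"
  have bc: "b \<in> carrier ?M" unfolding Map_monoid_def b_def using hX by auto
  have ac: "a \<in> carrier ?M" unfolding Map_monoid_def a_def using x0
    using hinj by auto
  have oc: "\<one>\<^bsub>?M\<^esub> \<in> carrier ?M" unfolding Map_monoid_def by auto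
  have ab: "a \<otimes>\<^bsub>?M\<^esub> b = \<one>\<^bsub>?M\<^esub>"
    unfolding Map_monoid_def a_def b_def compose_def
    using hinj hX by (auto intro!: ext)
  define ba where "ba = b \<otimes>\<^bsub>?M\<^esub> a"
  have bac: "ba \<in> carrier ?M" unfolding ba_def Map_monoid_def using ac bc
    by (auto simp: compose_def Map_monoid_def PiE_def Pi_def extensional_def)
  have ne: "ba \<noteq> \<one>\<^bsub>?M\<^esub>"
  proof
    assume "ba = \<one>\<^bsub>?M\<^esub>"
    hence "ba x0 = x0" unfolding Map_monoid_def using x0 by simp
    moreover have nx: "x0 \<notin> h ` X"
    proof
      assume "x0 \<in> h ` X"
      then obtain x where "x \<in> X" "x0 = h x" by blast
      thus False using hX[of x] by simp
    qed
    moreover have "a x0 = x0" unfolding a_def using nx x0 by simp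
    moreover have "ba x0 = b (a x0)"
      unfolding ba_def by (simp add: Map_monoid_def compose_def x0)
    moreover have "b x0 = h x0" unfolding b_def using x0 by simp
    ultimately show False using hX[OF x0] by auto
  qed
  define K where "K = {a, b, \<one>\<^bsub>?M\<^esub>, ba}"
  have "K \<subseteq> carrier ?M \<and> finite K \<and> (1/10::real) > 0" unfolding K_def using ac bc oc bac by auto
  note ex = sof[unfolded sofic_def, rule_format, OF this]
  from ex obtain Y and \<phi> :: "('a \<Rightarrow> 'a) \<Rightarrow> nat \<Rightarrow> nat" where
    Yf: "finite Y" and Yne: "Y \<noteq> {}" and maps: "\<forall>m \<in> carrier ?M. \<phi> m \<in> Y \<rightarrow> Y" and
    hm: "\<forall>k1\<in>K. \<forall>k2\<in>K. hamming Y (\<phi> (k1 \<otimes>\<^bsub>?M\<^esub> k2)) (\<phi> k1 \<circ> \<phi> k2) \<le> 1/10" and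
    h1: "hamming Y (\<phi> \<one>\<^bsub>?M\<^esub>) id \<le> 1/10" and
    hi: "\<forall>k1\<in>K. \<forall>k2\<in>K. k1 \<noteq> k2 \<longrightarrow> hamming Y (\<phi> k1) (\<phi> k2) \<ge> 1 - 1/10"
    by (elim exE conjE) blast
  define A where "A = \<phi> a"
  define B where "B = \<phi> b"
  define E where "E = \<phi> \<one>\<^bsub>?M\<^esub>"
  define C where "C = \<phi> ba"
  have e1: "hamming Y E (A \<circ> B) \<le> 1/10" 
  proof -
    have "a \<in> K" "b \<in> K" unfolding K_def by auto
    hence "hamming Y (\<phi> (a \<otimes>\<^bsub>?M\<^esub> b)) (\<phi> a \<circ> \<phi> b) \<le> 1/10" using hm by blast
    thus ?thesis unfolding E_def A_def B_def ab .
  qed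
  have e2: "hamming Y E id \<le> 1/10" using h1 E_def by simp
  have e3: "hamming Y C (B \<circ> A) \<le> 1/10" 
  proof -
    have "a \<in> K" "b \<in> K" unfolding K_def by auto
    hence "hamming Y (\<phi> (b \<otimes>\<^bsub>?M\<^esub> a)) (\<phi> b \<circ> \<phi> a) \<le> 1/10" using hm by blast
    thus ?thesis unfolding C_def A_def B_def ba_def .
  qed
  have e4: "hamming Y C E \<ge> 1 - 1/10" 
  proof -
    have "ba \<in> K" "\<one>\<^bsub>?M\<^esub> \<in> K" unfolding K_def by auto
    thus ?thesis using hi ne unfolding C_def E_def by blast
  qed
  have Bm: "\<forall>y\<in>Y. B y \<in> Y" using maps bc unfolding B_def by auto
  have "hamming Y (A \<circ> B) id \<le> hamming Y (A \<circ> B) E + hamming Y E id"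
    by (rule hamming_triangle[OF Yf])
  hence f1: "hamming Y (A \<circ> B) id \<le> 2/10" using e1 e2 hamming_sym[of Y "A \<circ> B" E] by linarith
  have f2: "hamming Y (B \<circ> A) id \<le> 2/10" using key[OF Yf Bm, of A] f1 by linarith
  have "hamming Y C E \<le> hamming Y C (B \<circ> A) + hamming Y (B \<circ> A) E"
    by (rule hamming_triangle[OF Yf])
  moreover have "hamming Y (B \<circ> A) E \<le> hamming Y (B \<circ> A) id + hamming Y id E"
    by (rule hamming_triangle[OF Yf])
  ultimately have "hamming Y C E \<le> 4/10" using e2 e3 f2 hamming_sym[of Y id E] by linarith
  with e4 show False by linarith
qed

end
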